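(* For all integers $k,n\ge 0$, $$\sum_{i=0}^{n}\sum_{j=0}^{n-i}(-1)^i\binom{n-i}{j}\binom{k}{i}\binom{k}{j}=1.$$ *)

theory Defs
  imports Main
begin

end

theory Submission
  imports Defs "HOL-Computational_Algebra.Formal_Power_Series"
begin

lemma inner: "(\<Sum>j=0..m. (m choose j) * (k choose j)) = (k + m) choose m"
proof -
  have "(\<Sum>j=0..m. (m choose j) * (k choose j)) = (\<Sum>j\<le>m. (k choose j) * (m choose (m - j)))"
    by (rule sum.cong) (auto simp: atLeast0AtMost binomial_symmetric[symmetric])
  also have "\<dots> = (k + m) choose m" by (rule vandermonde)
  finally show ?thesis .
qed

lemma neg: "(of_nat ((k + m) choose m) :: real) = (-1)^m * ((- of_nat k - 1) gchoose m)"
proof -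
  have "(of_nat ((k + m) choose m) :: real) = (of_nat (k+m) gchoose m)"
    by (rule binomial_gbinomial)
  also have "\<dots> = (-1)^m * ((of_nat m - of_nat (k+m) - 1) gchoose m)"
    by (rule gbinomial_negated_upper)
  also have "(of_nat m - of_nat (k+m) - 1 :: real) = - of_nat k - 1" by simp
  finally show ?thesis .
qed

lemma negone: "((-1::real) gchoose n) = (-1)^n"
proof -
  have "((-1::real) gchoose n) = (-1)^n * ((of_nat n - (-1) - 1) gchoose n)"
    by (rule gbinomial_negated_upper)
  also have "\<dots> = (-1)^n * (of_nat (n choose n))"
    by (simp flip: binomial_gbinomial)
  finally show ?thesis by simp
qed

theorem corollary3p4:
  fixes k n :: nat
  shows "(\<Sum>i=0..n. \<Sum>j=0..n-i. (-1::int)^i * int ((n-i) choose j) * int (k choose i) * int (k choose j)) = 1"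
proof -
  have "(\<Sum>i=0..n. \<Sum>j=0..n-i. (-1::int)^i * int ((n-i) choose j) * int (k choose i) * int (k choose j))
      = (\<Sum>i=0..n. (-1::int)^i * int (k choose i) * int (\<Sum>j=0..n-i. ((n-i) choose j) * (k choose j)))"
    by (simp add: sum_distrib_left of_nat_sum mult_ac)
  also have "\<dots> = (\<Sum>i=0..n. (-1::int)^i * int (k choose i) * int ((k + (n-i)) choose (n-i)))"
    by (simp add: inner)
  finally have A: "(\<Sum>i=0..n. \<Sum>j=0..n-i. (-1::int)^i * int ((n-i) choose j) * int (k choose i) * int (k choose j))
      = (\<Sum>i=0..n. (-1::int)^i * int (k choose i) * int ((k + (n-i)) choose (n-i)))" .
  have B: "(\<Sum>i=0..n. (-1::real)^i * real (k choose i) * real ((k + (n-i)) choose (n-i))) = 1"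
  proof -
    have "(\<Sum>i=0..n. (-1::real)^i * real (k choose i) * real ((k + (n-i)) choose (n-i)))
        = (\<Sum>i=0..n. (-1::real)^n * ((of_nat k gchoose i) * ((- of_nat k - 1) gchoose (n-i))))"
    proof (rule sum.cong)
      fix i assume "i \<in> {0..n}"
      hence e: "(-1::real)^i * (-1)^(n-i) = (-1)^n" by (simp add: power_add[symmetric])
      have "(-1::real)^i * real (k choose i) * real ((k + (n-i)) choose (n-i))
          = ((-1::real)^i * (-1)^(n-i)) * ((of_nat k gchoose i) * ((- of_nat k - 1) gchoose (n-i)))"
        unfolding neg unfolding binomial_gbinomial by (simp only: mult_ac)
      thus "(-1::real)^i * real (k choose i) * real ((k + (n-i)) choose (n-i))
          = (-1::real)^n * ((of_nat k gchoose i) * ((- of_nat k - 1) gchoose (n-i)))"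
        by (simp only: e)
    qed simp
    also have "\<dots> = (-1)^n * ((of_nat k + (- of_nat k - 1)) gchoose n)"
      by (simp add: sum_distrib_left[symmetric] gbinomial_Vandermonde)
    also have "\<dots> = 1" by (simp add: negone flip: power_add)
    finally show ?thesis .
  qed
  have "real_of_int (\<Sum>i=0..n. (-1::int)^i * int (k choose i) * int ((k + (n-i)) choose (n-i))) = 1"
    using B by simp
  hence "(\<Sum>i=0..n. (-1::int)^i * int (k choose i) * int ((k + (n-i)) choose (n-i))) = 1"
    by linarith
  with A show ?thesis by simp
qed

end
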